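(* Let $v\ge2$ and $M,N\in{\cal I}_v$ with $N=N_1+N_2$, where $N_1=\beta M$ for some $\beta\in\mathbb R$ and $M\perp N_2$ with respect to the scalar product $(x,y):=\mathrm{Re}(xy^* )$. Then $$[e^M,e^N]=2\,\frac{\sin|M|}{|M|}\,\frac{\sin|N|}{|N|}\,MN_2 .$$
   Context: ${\cal A}_v$ is the real Cayley-Dickson algebra of dimension $2^v$ (iterated doubling of $\mathbb R$; ${\cal A}_2=\mathbb H$), $z^*$ is conjugation, $\mathrm{Re}(z)=(z+z^* )/2$, $|z|=(zz^* )^{1/2}$, and ${\cal I}_v=\{z\in{\cal A}_v:\mathrm{Re}(z)=0\}$. For $M\in{\cal I}_v$, $e^M=\cos|M|+\frac{\sin|M|}{|M|}M$ (with $\frac{\sin|M|}{|M|}:=1$ when $M=0$). $[a,b]:=ab-ba$. *)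

theory Defs
  imports Complex_Main "HOL-Library.Function_Algebras"
begin

text \<open>Real Cayley-Dickson algebra A_v of dimension 2^v.  Elements are represented as
  coordinate functions nat => real that vanish at all indices >= 2^v.
  A_(v+1) = A_v x A_v, with the (a,b) pair stored as coordinates 0..2^v-1 (a) and
  2^v..2^(v+1)-1 (b).  Doubling convention:
  (a,b)(c,d) = (ac - d^* b, d a + b c^*),   (a,b)^* = (a^*, -b).\<close>

type_synonym cd = "nat \<Rightarrow> real"

definition cd_elem :: "nat \<Rightarrow> cd set" where
  "cd_elem v = {x. \<forall>i\<ge>2^v. x i = 0}"

definition cd_lo :: "nat \<Rightarrow> cd \<Rightarrow> cd" where
  "cd_lo v x = (\<lambda>i. if i < 2^v then x i else 0)"

definition cd_hi :: "nat \<Rightarrow> cd \<Rightarrow> cd" where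
  "cd_hi v x = (\<lambda>i. if i < 2^v then x (i + 2^v) else 0)"

definition cd_join :: "nat \<Rightarrow> cd \<Rightarrow> cd \<Rightarrow> cd" where
  "cd_join v a b = (\<lambda>i. if i < 2^v then a i else if i < 2^(Suc v) then b (i - 2^v) else 0)"

fun cd_conj :: "nat \<Rightarrow> cd \<Rightarrow> cd" where
  "cd_conj 0 x = (\<lambda>i. if i = 0 then x 0 else 0)"
| "cd_conj (Suc v) x = cd_join v (cd_conj v (cd_lo v x)) (- cd_hi v x)"

fun cd_mult :: "nat \<Rightarrow> cd \<Rightarrow> cd \<Rightarrow> cd" where
  "cd_mult 0 x y = (\<lambda>i. if i = 0 then x 0 * y 0 else 0)"
| "cd_mult (Suc v) x y =
     (let a = cd_lo v x; b = cd_hi v x; c = cd_lo v y; d = cd_hi v y in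
      cd_join v (cd_mult v a c - cd_mult v (cd_conj v d) b)
                (cd_mult v d a + cd_mult v b (cd_conj v c)))"

definition cd_one :: cd where
  "cd_one = (\<lambda>i. if i = 0 then 1 else 0)"

definition cd_scale :: "real \<Rightarrow> cd \<Rightarrow> cd" where
  "cd_scale c x = (\<lambda>i. c * x i)"

text \<open>Re(z) = (z + z^*)/2; this element is real (a multiple of 1), we take its real value.\<close>
definition cd_Re :: "nat \<Rightarrow> cd \<Rightarrow> real" where
  "cd_Re v z = (z + cd_conj v z) 0 / 2"

definition cd_norm :: "nat \<Rightarrow> cd \<Rightarrow> real" where
  "cd_norm v z = sqrt (cd_Re v (cd_mult v z (cd_conj v z)))"

definition cd_inner :: "nat \<Rightarrow> cd \<Rightarrow> cd \<Rightarrow> real" where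
  "cd_inner v x y = cd_Re v (cd_mult v x (cd_conj v y))"

definition cd_imag :: "nat \<Rightarrow> cd set" where
  "cd_imag v = {z \<in> cd_elem v. cd_Re v z = 0}"

definition sinc_cd :: "real \<Rightarrow> real" where
  "sinc_cd t = (if t = 0 then 1 else sin t / t)"

definition cd_exp :: "nat \<Rightarrow> cd \<Rightarrow> cd" where
  "cd_exp v M = cd_scale (cos (cd_norm v M)) cd_one + cd_scale (sinc_cd (cd_norm v M)) M"

definition cd_comm :: "nat \<Rightarrow> cd \<Rightarrow> cd \<Rightarrow> cd" where
  "cd_comm v a b = cd_mult v a b - cd_mult v b a"

end

theory Submission
  imports Defs
begin

lemma conj_formula:
  "cd_conj v x = (\<lambda>i. if i = 0 then x 0 else if i < 2^v then - x i else 0)"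
proof (induction v arbitrary: x)
  case 0
  then show ?case by (auto simp: fun_eq_iff)
next
  case (Suc v)
  have p: "(0::nat) < 2^v" by simp
  show ?case using p
    by (auto simp: fun_eq_iff Suc cd_join_def cd_lo_def cd_hi_def)
qed

lemma conj_add: "cd_conj v (x + y) = cd_conj v x + cd_conj v y"
  by (auto simp: conj_formula fun_eq_iff)
lemma conj_neg: "cd_conj v (- x) = - cd_conj v x"
  by (auto simp: conj_formula fun_eq_iff)
lemma conj_diff: "cd_conj v (x - y) = cd_conj v x - cd_conj v y"
  by (auto simp: conj_formula fun_eq_iff)
lemma conj_scale: "cd_conj v (cd_scale c x) = cd_scale c (cd_conj v x)"
  by (auto simp: conj_formula fun_eq_iff cd_scale_def)
lemma conj_lo: "cd_conj v (cd_lo v x) = cd_conj v x"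
  by (auto simp: conj_formula fun_eq_iff cd_lo_def)
lemma conj_conj: "cd_conj v (cd_conj v x) = cd_lo v x"
  by (auto simp: conj_formula fun_eq_iff cd_lo_def)
lemma conj_zero: "cd_conj v 0 = 0"
  by (auto simp: conj_formula fun_eq_iff)

lemma lo_add: "cd_lo v (x + y) = cd_lo v x + cd_lo v y"
  by (auto simp: cd_lo_def fun_eq_iff)
lemma hi_add: "cd_hi v (x + y) = cd_hi v x + cd_hi v y"
  by (auto simp: cd_hi_def fun_eq_iff)
lemma join_add: "cd_join v (a + c) (b + d) = cd_join v a b + cd_join v c d"
  by (auto simp: cd_join_def fun_eq_iff)
lemma lo_scale: "cd_lo v (cd_scale c x) = cd_scale c (cd_lo v x)"
  by (auto simp: cd_lo_def fun_eq_iff cd_scale_def)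
lemma hi_scale: "cd_hi v (cd_scale c x) = cd_scale c (cd_hi v x)"
  by (auto simp: cd_hi_def fun_eq_iff cd_scale_def)
lemma join_scale: "cd_join v (cd_scale c a) (cd_scale c b) = cd_scale c (cd_join v a b)"
  by (auto simp: cd_join_def fun_eq_iff cd_scale_def)
lemma scale_add: "cd_scale c (x + y) = cd_scale c x + cd_scale c y"
  by (auto simp: fun_eq_iff cd_scale_def algebra_simps)
lemma scale_diff: "cd_scale c (x - y) = cd_scale c x - cd_scale c y"
  by (auto simp: fun_eq_iff cd_scale_def algebra_simps)
lemma scale_neg: "cd_scale c (- x) = - cd_scale c x"
  by (auto simp: fun_eq_iff cd_scale_def algebra_simps)

lemma mult_add:
  "cd_mult v (x + y) z = cd_mult v x z + cd_mult v y z \<and>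
   cd_mult v z (x + y) = cd_mult v z x + cd_mult v z y"
proof (induction v arbitrary: x y z)
  case 0
  then show ?case by (auto simp: fun_eq_iff algebra_simps)
next
  case (Suc v)
  show ?case
    unfolding cd_mult.simps Let_def lo_add hi_add conj_add Suc.IH[THEN conjunct1] Suc.IH[THEN conjunct2]
      join_add[symmetric]
    by (intro conjI arg_cong2[where f="cd_join v"]) (simp_all add: fun_eq_iff algebra_simps)
qed

lemma mult_addL: "cd_mult v (x + y) z = cd_mult v x z + cd_mult v y z"
  using mult_add by blast
lemma mult_addR: "cd_mult v z (x + y) = cd_mult v z x + cd_mult v z y"
  using mult_add by blast

lemma mult_zeroL: "cd_mult v 0 z = 0"
  using mult_addL[of v 0 0 z] by simp
lemma mult_zeroR: "cd_mult v z 0 = 0"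
  using mult_addR[of v z 0 0] by simp
lemma mult_negL: "cd_mult v (- x) z = - cd_mult v x z"
  using mult_addL[of v x "- x" z] by (simp add: mult_zeroL eq_neg_iff_add_eq_0 add.commute)
lemma mult_negR: "cd_mult v z (- x) = - cd_mult v z x"
  using mult_addR[of v z x "- x"] by (simp add: mult_zeroR eq_neg_iff_add_eq_0 add.commute)
lemma mult_diffL: "cd_mult v (x - y) z = cd_mult v x z - cd_mult v y z"
  using mult_addL[of v x "- y" z] by (simp add: mult_negL)
lemma mult_diffR: "cd_mult v z (x - y) = cd_mult v z x - cd_mult v z y"
  using mult_addR[of v z x "- y"] by (simp add: mult_negR)

lemma mult_scale:
  "cd_mult v (cd_scale c x) z = cd_scale c (cd_mult v x z) \<and>
   cd_mult v z (cd_scale c x) = cd_scale c (cd_mult v z x)"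
proof (induction v arbitrary: x z)
  case 0
  then show ?case by (auto simp: fun_eq_iff algebra_simps cd_scale_def)
next
  case (Suc v)
  show ?case
    unfolding cd_mult.simps Let_def lo_scale hi_scale conj_scale Suc.IH[THEN conjunct1] Suc.IH[THEN conjunct2]
      join_scale[symmetric] scale_add scale_diff by simp
qed

lemma mult_scaleL: "cd_mult v (cd_scale c x) z = cd_scale c (cd_mult v x z)"
  using mult_scale by blast
lemma mult_scaleR: "cd_mult v z (cd_scale c x) = cd_scale c (cd_mult v z x)"
  using mult_scale by blast

lemma join_elem: "cd_join v a b \<in> cd_elem (Suc v)"
  by (auto simp: cd_join_def cd_elem_def)
lemma mult_elem: "cd_mult v x y \<in> cd_elem v"
proof (cases v)
  case 0
  then show ?thesis by (auto simp: cd_elem_def)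
next
  case (Suc w)
  then show ?thesis by (simp add: Let_def join_elem)
qed
lemma lo_elem: "x \<in> cd_elem v \<Longrightarrow> cd_lo v x = x"
  by (auto simp: cd_elem_def cd_lo_def fun_eq_iff)
lemma lo_mult: "cd_lo v (cd_mult v x y) = cd_mult v x y"
  by (rule lo_elem[OF mult_elem])
lemma lo_lo: "cd_lo v (cd_lo v x) = cd_lo v x"
  by (auto simp: cd_lo_def fun_eq_iff)
lemma lo_hi: "cd_lo v (cd_hi v x) = cd_hi v x"
  by (auto simp: cd_lo_def cd_hi_def fun_eq_iff)
lemma lo_conj: "cd_lo v (cd_conj v x) = cd_conj v x"
  by (auto simp: cd_lo_def conj_formula fun_eq_iff)
lemma lo_neg: "cd_lo v (- x) = - cd_lo v x"
  by (auto simp: cd_lo_def fun_eq_iff)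
lemma lo_join: "cd_lo v (cd_join v a b) = cd_lo v a"
  by (auto simp: cd_lo_def cd_join_def fun_eq_iff)
lemma hi_join: "cd_hi v (cd_join v a b) = cd_lo v b"
  by (auto simp: cd_lo_def cd_hi_def cd_join_def fun_eq_iff)
lemma join_lo_hi: "cd_join v (cd_lo v x) (cd_hi v x) = cd_lo (Suc v) x"
  by (auto simp: cd_lo_def cd_hi_def cd_join_def fun_eq_iff)
lemma lo_lo_Suc: "cd_lo v (cd_lo (Suc v) x) = cd_lo v x"
  by (auto simp: cd_lo_def fun_eq_iff)
lemma hi_lo_Suc: "cd_hi v (cd_lo (Suc v) x) = cd_hi v x"
  by (auto simp: cd_lo_def cd_hi_def fun_eq_iff)

lemma mult_lo:
  "cd_mult v (cd_lo v x) y = cd_mult v x y \<and> cd_mult v y (cd_lo v x) = cd_mult v y x"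
proof (induction v arbitrary: x y)
  case 0
  then show ?case by (auto simp: fun_eq_iff cd_lo_def)
next
  case (Suc v)
  show ?case
    unfolding cd_mult.simps Let_def lo_lo_Suc hi_lo_Suc by simp
qed

lemma one_lo: "cd_lo v cd_one = cd_one"
  by (auto simp: cd_lo_def cd_one_def fun_eq_iff)
lemma one_hi: "cd_hi v cd_one = 0"
  by (auto simp: cd_hi_def cd_one_def fun_eq_iff)
lemma one_conj: "cd_conj v cd_one = cd_one"
  by (auto simp: conj_formula cd_one_def fun_eq_iff)

lemma mult_one:
  "cd_mult v cd_one x = cd_lo v x \<and> cd_mult v x cd_one = cd_lo v x"
proof (induction v arbitrary: x)
  case 0
  then show ?case by (auto simp: fun_eq_iff cd_lo_def cd_one_def)
next
  case (Suc v)
  show ?case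
    unfolding cd_mult.simps Let_def one_lo one_hi one_conj conj_zero mult_zeroL mult_zeroR
      Suc.IH[THEN conjunct1] Suc.IH[THEN conjunct2] lo_lo lo_hi
    by (simp add: join_lo_hi)
qed

lemma conj_mult:
  "cd_conj v (cd_mult v x y) = cd_mult v (cd_conj v y) (cd_conj v x)"
proof (induction v arbitrary: x y)
  case 0
  then show ?case by (auto simp: fun_eq_iff)
next
  case (Suc v)
  show ?case
    unfolding cd_mult.simps Let_def cd_conj.simps lo_join hi_join conj_lo lo_add lo_mult
      lo_conj lo_neg lo_hi conj_diff Suc.IH conj_conj mult_negL mult_negR conj_neg
    by (simp add: algebra_simps)
qed

lemma Re_eq: "cd_Re v z = z 0"
  by (simp add: cd_Re_def conj_formula)

lemma imag_conj: "z \<in> cd_imag v \<Longrightarrow> cd_conj v z = - z"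
  by (auto simp: cd_imag_def cd_elem_def Re_eq conj_formula fun_eq_iff)

lemma anticomm:
  assumes x: "x \<in> cd_imag v" and y: "y \<in> cd_imag v" and o: "cd_inner v x y = 0"
  shows "cd_mult v y x = - cd_mult v x y"
proof -
  have c: "cd_conj v (cd_mult v x y) = cd_mult v y x"
    by (simp add: conj_mult imag_conj[OF x] imag_conj[OF y] mult_negL mult_negR)
  have z0: "cd_mult v x y 0 = 0"
    using o by (simp add: cd_inner_def Re_eq imag_conj[OF y] mult_negR)
  have e: "cd_mult v x y \<in> cd_elem v" by (rule mult_elem)
  show ?thesis
    unfolding c[symmetric] using z0 e by (auto simp: conj_formula fun_eq_iff cd_elem_def)
qed

theorem lemma9:
  fixes v :: nat and M N N1 N2 :: cd and \<beta> :: real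
  assumes "v \<ge> 2"
    and "M \<in> cd_imag v" and "N \<in> cd_imag v"
    and "N = N1 + N2"
    and "N1 = cd_scale \<beta> M"
    and "cd_inner v M N2 = 0"
  shows "cd_comm v (cd_exp v M) (cd_exp v N) =
         cd_scale (2 * sinc_cd (cd_norm v M) * sinc_cd (cd_norm v N)) (cd_mult v M N2)"
proof -
  have N2: "N2 = N - cd_scale \<beta> M" using assms(4,5) by simp
  have N2i: "N2 \<in> cd_imag v"
    using assms(2,3) unfolding N2
    by (auto simp: cd_imag_def cd_elem_def Re_eq cd_scale_def)
  have ac: "cd_mult v N2 M = - cd_mult v M N2"
    by (rule anticomm[OF assms(2) N2i assms(6)])
  have MN: "cd_mult v M N = cd_scale \<beta> (cd_mult v M M) + cd_mult v M N2"
    unfolding assms(4,5) by (simp add: mult_addR mult_scaleR)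
  have NM: "cd_mult v N M = cd_scale \<beta> (cd_mult v M M) - cd_mult v M N2"
    unfolding assms(4,5) by (simp add: mult_addL mult_scaleL ac)
  have loM: "cd_lo v M = M" using assms(2) by (simp add: lo_elem cd_imag_def)
  have loN: "cd_lo v N = N" using assms(3) by (simp add: lo_elem cd_imag_def)
  have o1: "cd_mult v cd_one x = cd_lo v x" "cd_mult v x cd_one = cd_lo v x" for x
    using mult_one by blast+
  have lo1: "cd_lo v cd_one = cd_one" by (rule one_lo)
  show ?thesis
    unfolding cd_comm_def cd_exp_def mult_addL mult_addR mult_scaleL mult_scaleR o1 loM loN lo1 MN NM
    by (simp add: mult_addL mult_addR mult_scaleL mult_scaleR o1 loM loN lo1 MN NM
        fun_eq_iff cd_scale_def algebra_simps)
qed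

end
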